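(* Let $n>2$, $1<k<n$, $G=H_B(n,k)$. For $h\ge 1$ let $d^{(h)}$ be the number of unordered pairs $\{u,v\}$ of vertices of $G$ with $d(u,v)=h$; let $d^{(2)}_{V_1}$ be the number of unordered pairs of vertices of $V_1$ at distance $2$, and $d^{(2)}_{V_2}$, $d^{(4)}_{V_2}$ the numbers of unordered pairs of vertices of $V_2$ at distance $2$ and $4$ respectively. Then (1) $d^{(1)}=\binom{n}{k}\left(\frac{3^k-3}{2}+2^{k-1}(3^{n-k}-1)\right)$; (2) $d^{(3)}=\binom{n}{k}\left(\frac{3^n-1}{2}-\binom{n}{k}-\frac{3^k-3}{2}-2^{k-1}(3^{n-k}-1)\right)$; (3) $d^{(2)}_{V_1}=\binom{\binom{n}{k}}{2}$; (4) $d^{(2)}_{V_2}+d^{(4)}_{V_2}=\binom{\frac{3^n-1}{2}-\binom{n}{k}}{2}$.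
   Context: Fix integers $n\ge 2$ and $1\le k<n$ and positive real numbers $x_1<x_2<\dots<x_n$. Let $\mathscr{B}_n=\{\pm x_1,\pm x_2,\dots,\pm x_{n-1},x_n\}$ (so $-x_n\notin\mathscr{B}_n$). Let $\phi(\mathscr{B}_n)$ be the family of all nonempty subsets $S\subseteq\mathscr{B}_n$ whose elements have pairwise distinct absolute values and whose element of largest absolute value is positive. Let $\mathscr{B}_n^+=\{x_1,\dots,x_n\}$, let $V_1$ be the set of all $k$-element subsets of $\mathscr{B}_n^+$, and let $V_2=\phi(\mathscr{B}_n)\setminus V_1$. For $A\in\phi(\mathscr{B}_n)$ put $A^\dagger=\{|a|:a\in A\}$. The bipartite Kneser B type-$k$ graph $H_B(n,k)$ is the simple graph with vertex set $V_1\cup V_2$ in which $X\in V_1$ and $Y\in V_2$ are adjacent if and only if $X\subseteq Y^\dagger$ or $Y^\dagger\subseteq X$, and there are no other edges. $d(u,v)$ denotes graph distance. *)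

theory Defs
  imports Main Complex_Main
begin

definition Bn :: "nat \<Rightarrow> (nat \<Rightarrow> real) \<Rightarrow> real set" where
  "Bn n x = {x i | i. 1 \<le> i \<and> i \<le> n} \<union> {- x i | i. 1 \<le> i \<and> i \<le> n - 1}"

definition Bn_plus :: "nat \<Rightarrow> (nat \<Rightarrow> real) \<Rightarrow> real set" where
  "Bn_plus n x = {x i | i. 1 \<le> i \<and> i \<le> n}"

definition phiB :: "nat \<Rightarrow> (nat \<Rightarrow> real) \<Rightarrow> real set set" where
  "phiB n x = {S. S \<noteq> {} \<and> S \<subseteq> Bn n x \<and> inj_on abs S \<and>
      (\<exists>a\<in>S. 0 < a \<and> (\<forall>b\<in>S. \<bar>b\<bar> \<le> \<bar>a\<bar>))}"

definition V1 :: "nat \<Rightarrow> nat \<Rightarrow> (nat \<Rightarrow> real) \<Rightarrow> real set set" where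
  "V1 n k x = {S. S \<subseteq> Bn_plus n x \<and> card S = k}"

definition V2 :: "nat \<Rightarrow> nat \<Rightarrow> (nat \<Rightarrow> real) \<Rightarrow> real set set" where
  "V2 n k x = phiB n x - V1 n k x"

definition HB_verts :: "nat \<Rightarrow> nat \<Rightarrow> (nat \<Rightarrow> real) \<Rightarrow> real set set" where
  "HB_verts n k x = V1 n k x \<union> V2 n k x"

definition HB_adj :: "nat \<Rightarrow> nat \<Rightarrow> (nat \<Rightarrow> real) \<Rightarrow> real set \<Rightarrow> real set \<Rightarrow> bool" where
  "HB_adj n k x u v \<longleftrightarrow>
     (u \<in> V1 n k x \<and> v \<in> V2 n k x \<and> (u \<subseteq> abs ` v \<or> abs ` v \<subseteq> u)) \<or>
     (v \<in> V1 n k x \<and> u \<in> V2 n k x \<and> (v \<subseteq> abs ` u \<or> abs ` u \<subseteq> v))"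

definition HB_edges :: "nat \<Rightarrow> nat \<Rightarrow> (nat \<Rightarrow> real) \<Rightarrow> (real set \<times> real set) set" where
  "HB_edges n k x = {(u, v). HB_adj n k x u v}"

definition HB_dist_eq :: "nat \<Rightarrow> nat \<Rightarrow> (nat \<Rightarrow> real) \<Rightarrow> real set \<Rightarrow> real set \<Rightarrow> nat \<Rightarrow> bool" where
  "HB_dist_eq n k x u v h \<longleftrightarrow>
     (u, v) \<in> (HB_edges n k x) ^^ h \<and> (\<forall>m<h. (u, v) \<notin> (HB_edges n k x) ^^ m)"

definition pairs_at_dist :: "nat \<Rightarrow> nat \<Rightarrow> (nat \<Rightarrow> real) \<Rightarrow> real set set \<Rightarrow> nat \<Rightarrow> nat" where
  "pairs_at_dist n k x W h =
     card {{u, v} | u v. u \<in> W \<and> v \<in> W \<and> u \<noteq> v \<and> HB_dist_eq n k x u v h}"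

end

theory Submission
  imports Defs "HOL-Library.FuncSet"
begin


definition Sig :: "real set \<Rightarrow> real set set" where
  "Sig P = {Y. Y \<subseteq> P \<union> uminus ` P \<and> inj_on abs Y}"

definition toF :: "real set \<Rightarrow> real set \<Rightarrow> real \<Rightarrow> nat" where
  "toF P Y = (\<lambda>p. if p \<in> P then (if p \<in> Y then 1 else if - p \<in> Y then 2 else 0) else undefined)"

definition toY :: "real set \<Rightarrow> (real \<Rightarrow> nat) \<Rightarrow> real set" where
  "toY P f = {p\<in>P. f p = 1} \<union> uminus ` {p\<in>P. f p = 2}"

lemma sig_abs_mem:
  assumes "Y \<in> Sig P" "\<forall>p\<in>P. 0 < p" "p \<in> P"
  shows "p \<in> abs ` Y \<longleftrightarrow> p \<in> Y \<or> - p \<in> Y"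
proof
  assume "p \<in> abs ` Y"
  then obtain y where "y \<in> Y" "p = \<bar>y\<bar>" by auto
  then show "p \<in> Y \<or> - p \<in> Y" by (cases "y \<ge> 0") auto
next
  assume "p \<in> Y \<or> - p \<in> Y"
  then show "p \<in> abs ` Y" using assms by (metis abs_minus_cancel abs_of_pos image_eqI)
qed

lemma sig_abs_sub:
  assumes "Y \<in> Sig P" "\<forall>p\<in>P. 0 < p"
  shows "abs ` Y \<subseteq> P"
  using assms unfolding Sig_def by force

lemma sig_not_both:
  assumes "Y \<in> Sig P" "\<forall>p\<in>P. 0 < p" "p \<in> P" "p \<in> Y"
  shows "- p \<notin> Y"
proof
  assume "- p \<in> Y"
  have "inj_on abs Y" using assms unfolding Sig_def by auto
  then have "p = - p" using assms \<open>- p \<in> Y\<close> unfolding inj_on_def by (metis abs_minus_cancel)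
  then show False using assms by auto
qed

lemma sig_count:
  assumes fin: "finite P" and pos: "\<forall>p\<in>P. 0 < p" and B: "\<forall>p\<in>P. B p \<subseteq> {0,1,2}"
  shows "card {Y\<in>Sig P. \<forall>p\<in>P. toF P Y p \<in> B p} = (\<Prod>p\<in>P. card (B p))"
proof -
  let ?S = "{Y\<in>Sig P. \<forall>p\<in>P. toF P Y p \<in> B p}"
  have "bij_betw (toF P) ?S (PiE P B)"
  proof (rule bij_betwI[where g="toY P"])
    show "toF P \<in> ?S \<rightarrow> PiE P B"
      by (auto simp: PiE_iff toF_def extensional_def)
    show "toY P \<in> PiE P B \<rightarrow> ?S"
    proof
      fix f assume f: "f \<in> PiE P B"
      have tf: "toF P (toY P f) p = f p" if "p \<in> P" for p
      proof -
        have "f p \<in> B p" using f that by (auto simp: PiE_iff)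
        then have "f p \<in> {0,1,2}" using B that by blast
        moreover have "p \<in> toY P f \<longleftrightarrow> f p = 1" using pos that
          by (auto simp: toY_def) (metis neg_0_less_iff_less less_asym)
        moreover have "- p \<in> toY P f \<longleftrightarrow> f p = 2" using pos that
          by (auto simp: toY_def) (metis neg_0_less_iff_less less_asym)
        ultimately show ?thesis using that by (auto simp: toF_def)
      qed
      have "inj_on abs (toY P f)"
      proof (rule inj_onI)
        fix a b assume a: "a \<in> toY P f" and b: "b \<in> toY P f" and ab: "\<bar>a\<bar> = \<bar>b\<bar>"
        from a b ab pos show "a = b"
          unfolding toY_def by auto (smt (verit))+
      qed
      then have "toY P f \<in> Sig P" unfolding Sig_def toY_def by auto
      then show "toY P f \<in> ?S" using tf f by (auto simp: PiE_iff)
    qed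
    show "toY P (toF P Y) = Y" if "Y \<in> ?S" for Y
    proof -
      have Y: "Y \<in> Sig P" using that by auto
      show ?thesis
      proof
        show "toY P (toF P Y) \<subseteq> Y"
          by (auto simp: toY_def toF_def split: if_splits)
        show "Y \<subseteq> toY P (toF P Y)"
        proof
          fix y assume "y \<in> Y"
          then have "y \<in> P \<or> (\<exists>q\<in>P. y = - q)" using Y unfolding Sig_def by auto
          then show "y \<in> toY P (toF P Y)"
          proof
            assume "y \<in> P" then show ?thesis using \<open>y \<in> Y\<close> by (auto simp: toY_def toF_def)
          next
            assume "\<exists>q\<in>P. y = - q"
            then obtain q where q: "q \<in> P" "y = - q" by auto
            then have "q \<notin> Y" using sig_not_both[OF Y pos q(1)] \<open>y \<in> Y\<close> by auto
            then show ?thesis using q \<open>y \<in> Y\<close> by (auto simp: toY_def toF_def intro!: image_eqI[where x=q])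
          qed
        qed
      qed
    qed
    show "toF P (toY P f) = f" if f: "f \<in> PiE P B" for f
    proof
      fix p
      show "toF P (toY P f) p = f p"
      proof (cases "p \<in> P")
        case False then show ?thesis using f by (auto simp: toF_def PiE_iff extensional_def)
      next
        case True
        have "f p \<in> B p" using f True by (auto simp: PiE_iff)
        then have "f p \<in> {0,1,2}" using B True by blast
        moreover have "p \<in> toY P f \<longleftrightarrow> f p = 1" using pos True
          by (auto simp: toY_def) (metis neg_0_less_iff_less less_asym)
        moreover have "- p \<in> toY P f \<longleftrightarrow> f p = 2" using pos True
          by (auto simp: toY_def) (metis neg_0_less_iff_less less_asym)
        ultimately show ?thesis using True by (auto simp: toF_def)
      qed
    qed
  qed
  then have "card ?S = card (PiE P B)" by (rule bij_betw_same_card)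
  also have "\<dots> = (\<Prod>p\<in>P. card (B p))" using fin by (rule card_PiE)
  finally show ?thesis .
qed



definition maxpos :: "real set \<Rightarrow> bool" where
  "maxpos S \<longleftrightarrow> (\<exists>a\<in>S. 0 < a \<and> (\<forall>b\<in>S. \<bar>b\<bar> \<le> \<bar>a\<bar>))"

definition flip :: "real set \<Rightarrow> real set" where
  "flip Y = (let m = Max (abs ` Y) in
     if m \<in> Y then insert (- m) (Y - {m}) else insert m (Y - {- m}))"

locale sigctx =
  fixes P :: "real set"
  assumes fin: "finite P" and pos: "\<forall>p\<in>P. 0 < p"
begin

lemma finY: "Y \<in> Sig P \<Longrightarrow> finite Y"
  unfolding Sig_def using fin by (auto intro: finite_subset)

lemma mx_props:
  assumes Y: "Y \<in> Sig P" "Y \<noteq> {}"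
  shows "Max (abs ` Y) \<in> P" "Max (abs ` Y) \<in> Y \<or> - Max (abs ` Y) \<in> Y"
    "\<forall>b\<in>Y. \<bar>b\<bar> \<le> Max (abs ` Y)"
proof -
  have fY: "finite Y" using finY Y by auto
  have mem: "Max (abs ` Y) \<in> abs ` Y" using fY Y by (intro Max_in) auto
  then show "Max (abs ` Y) \<in> P" using sig_abs_sub[OF Y(1) pos] by auto
  then show "Max (abs ` Y) \<in> Y \<or> - Max (abs ` Y) \<in> Y" using sig_abs_mem[OF Y(1) pos] mem by auto
  show "\<forall>b\<in>Y. \<bar>b\<bar> \<le> Max (abs ` Y)" using fY by auto
qed

lemma maxpos_iff:
  assumes Y: "Y \<in> Sig P" "Y \<noteq> {}"
  shows "maxpos Y \<longleftrightarrow> Max (abs ` Y) \<in> Y"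
proof
  assume "maxpos Y"
  then obtain a where a: "a \<in> Y" "0 < a" "\<forall>b\<in>Y. \<bar>b\<bar> \<le> \<bar>a\<bar>" unfolding maxpos_def by auto
  have fY: "finite Y" using finY Y by auto
  have "Max (abs ` Y) = \<bar>a\<bar>"
    using a fY by (intro Max_eqI) (auto intro: image_eqI[where x=a])
  then show "Max (abs ` Y) \<in> Y" using a by auto
next
  assume m: "Max (abs ` Y) \<in> Y"
  have "Max (abs ` Y) \<in> P" using mx_props[OF Y] by auto
  then show "maxpos Y" unfolding maxpos_def using m mx_props(3)[OF Y] pos
    by (intro bexI[where x="Max (abs ` Y)"]) auto
qed

lemma flip_props:
  assumes Y: "Y \<in> Sig P" "Y \<noteq> {}"
  shows "flip Y \<in> Sig P" "flip Y \<noteq> {}" "abs ` flip Y = abs ` Y"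
    "maxpos (flip Y) \<longleftrightarrow> \<not> maxpos Y" "flip (flip Y) = Y"
proof -
  define m where "m = Max (abs ` Y)"
  have mP: "m \<in> P" and mY: "m \<in> Y \<or> - m \<in> Y" and mb: "\<forall>b\<in>Y. \<bar>b\<bar> \<le> m"
    using mx_props[OF Y] unfolding m_def by auto
  have m0: "0 < m" using mP pos by auto
  have inj: "inj_on abs Y" and sub: "Y \<subseteq> P \<union> uminus ` P" using Y unfolding Sig_def by auto
  have fY: "finite Y" using finY Y by auto
  have mabs: "m \<in> abs ` Y" unfolding m_def using fY Y by (intro Max_in) auto
  have absY: "abs ` (Y - {m, -m}) = abs ` Y - {m}"
    using m0 by auto
  have key: "abs ` flip Y = abs ` Y \<and> flip Y \<in> Sig P \<and> (m \<in> flip Y \<longleftrightarrow> m \<notin> Y) \<and> flip Y \<noteq> {}"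
  proof (cases "m \<in> Y")
    case True
    have nm: "- m \<notin> Y" using sig_not_both[OF Y(1) pos mP True] .
    have F: "flip Y = insert (- m) (Y - {m})" using True unfolding flip_def m_def Let_def by auto
    have "Y - {m} = Y - {m, -m}" using nm by auto
    then have A: "abs ` flip Y = abs ` Y" using F absY m0 True mabs by auto
    have "inj_on abs (flip Y)"
      unfolding F using inj
      by (auto simp: inj_on_insert inj_on_diff)
    then have "flip Y \<in> Sig P" using sub mP unfolding F Sig_def by auto
    then show ?thesis using A True m0 unfolding F by auto
  next
    case False
    then have nm: "- m \<in> Y" using mY by auto
    have F: "flip Y = insert m (Y - {- m})" using False unfolding flip_def m_def Let_def by auto
    have "Y - {-m} = Y - {m, -m}" using False by auto
    then have A: "abs ` flip Y = abs ` Y" using F absY m0 nm mabs by auto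
    have "inj_on abs (flip Y)"
      unfolding F using inj
      by (auto simp: inj_on_insert inj_on_diff)
    then have "flip Y \<in> Sig P" using sub mP unfolding F Sig_def by auto
    then show ?thesis using A False m0 unfolding F by auto
  qed
  then show "flip Y \<in> Sig P" "flip Y \<noteq> {}" "abs ` flip Y = abs ` Y" by auto
  have mf: "Max (abs ` flip Y) = m" using key m_def by auto
  show "maxpos (flip Y) \<longleftrightarrow> \<not> maxpos Y"
    using maxpos_iff[OF Y] maxpos_iff[of "flip Y"] key mf m_def by auto
  show "flip (flip Y) = Y"
  proof (cases "m \<in> Y")
    case True
    have nm: "- m \<notin> Y" using sig_not_both[OF Y(1) pos mP True] .
    have F: "flip Y = insert (- m) (Y - {m})" using True unfolding flip_def m_def Let_def by auto
    have "m \<notin> flip Y" using key True by auto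
    then have "flip (flip Y) = insert m (flip Y - {- m})" using mf unfolding flip_def Let_def by auto
    then show ?thesis using F True nm m0 by auto
  next
    case False
    then have nm: "- m \<in> Y" using mY by auto
    have F: "flip Y = insert m (Y - {- m})" using False unfolding flip_def m_def Let_def by auto
    then have "flip (flip Y) = insert (- m) (flip Y - {m})" using mf unfolding flip_def Let_def by auto
    then show ?thesis using F False nm m0 by auto
  qed
qed

lemma halving:
  "2 * card {Y\<in>Sig P. Y \<noteq> {} \<and> Q (abs ` Y) \<and> maxpos Y} = card {Y\<in>Sig P. Y \<noteq> {} \<and> Q (abs ` Y)}"
proof -
  let ?F = "{Y\<in>Sig P. Y \<noteq> {} \<and> Q (abs ` Y)}"
  let ?A = "{Y\<in>Sig P. Y \<noteq> {} \<and> Q (abs ` Y) \<and> maxpos Y}"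
  let ?B = "{Y\<in>Sig P. Y \<noteq> {} \<and> Q (abs ` Y) \<and> \<not> maxpos Y}"
  have finS: "finite (Sig P)"
    by (rule finite_subset[of _ "Pow (P \<union> uminus ` P)"]) (auto simp: Sig_def fin)
  have "bij_betw flip ?A ?B"
    by (rule bij_betwI[where g=flip]) (auto simp: flip_props)
  then have "card ?A = card ?B" by (rule bij_betw_same_card)
  moreover have "?F = ?A \<union> ?B" by auto
  moreover have "card (?A \<union> ?B) = card ?A + card ?B"
    by (rule card_Un_disjoint) (auto intro: finite_subset[OF _ finS])
  ultimately show ?thesis by simp
qed

end


lemma prod_if_subset:
  fixes a b :: nat
  assumes "finite P" "X \<subseteq> P"
  shows "(\<Prod>p\<in>P. if p \<in> X then a else b) = a ^ card X * b ^ (card P - card X)"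
proof -
  have "(\<Prod>p\<in>P. if p \<in> X then a else b) = (\<Prod>p\<in>P \<inter> {p. p \<in> X}. a) * (\<Prod>p\<in>P \<inter> - {p. p \<in> X}. b)"
    using assms(1) by (rule prod.If_cases)
  also have "P \<inter> {p. p \<in> X} = X" using assms by auto
  also have "P \<inter> - {p. p \<in> X} = P - X" by auto
  finally have "(\<Prod>p\<in>P. if p \<in> X then a else b) = (\<Prod>p\<in>X. a) * (\<Prod>p\<in>P - X. b)" .
  moreover have "card (P - X) = card P - card X" using assms by (simp add: card_Diff_subset finite_subset)
  ultimately show ?thesis by simp
qed

context sigctx
begin

lemma toF_range: "Y \<in> Sig P \<Longrightarrow> p \<in> P \<Longrightarrow> toF P Y p \<in> {0,1,2}"
  by (auto simp: toF_def)

lemma toF_nz: "Y \<in> Sig P \<Longrightarrow> p \<in> P \<Longrightarrow> toF P Y p \<noteq> 0 \<longleftrightarrow> p \<in> abs ` Y"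
  using sig_abs_mem[of Y P p] pos by (auto simp: toF_def)

lemma card_Sig: "card (Sig P) = 3 ^ card P"
proof -
  have "\<forall>Y\<in>Sig P. \<forall>p\<in>P. toF P Y p \<in> {0,1,2}" using toF_range by blast
  then have "Sig P = {Y\<in>Sig P. \<forall>p\<in>P. toF P Y p \<in> (\<lambda>_. {0,1,2}) p}" by blast
  then have "card (Sig P) = (\<Prod>p\<in>P. card ((\<lambda>_. {0::nat,1,2}) p))"
    using sig_count[OF fin pos, of "\<lambda>_. {0,1,2}"] by simp
  also have "\<dots> = 3 ^ card P" by (simp add: numeral_eq_Suc)
  finally show ?thesis .
qed

lemma finS: "finite (Sig P)"
  by (rule finite_subset[of _ "Pow (P \<union> uminus ` P)"]) (auto simp: Sig_def fin)

lemma count_all: "card {Y\<in>Sig P. Y \<noteq> {} \<and> True} = 3 ^ card P - 1"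
proof -
  have "{Y\<in>Sig P. Y \<noteq> {} \<and> True} = Sig P - {{}}" by auto
  moreover have "{} \<in> Sig P" by (auto simp: Sig_def)
  ultimately show ?thesis using card_Sig finS by (simp add: card_Diff_singleton)
qed

lemma count_sub:
  assumes X: "X \<subseteq> P"
  shows "card {Y\<in>Sig P. Y \<noteq> {} \<and> abs ` Y \<subseteq> X} = 3 ^ card X - 1"
proof -
  let ?B = "\<lambda>p. if p \<in> X then {0::nat,1,2} else {0}"
  have e: "{Y\<in>Sig P. abs ` Y \<subseteq> X} = {Y\<in>Sig P. \<forall>p\<in>P. toF P Y p \<in> ?B p}"
  proof (rule Collect_cong, rule iffI)
    fix Y assume "Y \<in> Sig P \<and> abs ` Y \<subseteq> X"
    then show "Y \<in> Sig P \<and> (\<forall>p\<in>P. toF P Y p \<in> ?B p)"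
      using toF_range[of Y] toF_nz[of Y] by auto
  next
    fix Y assume A: "Y \<in> Sig P \<and> (\<forall>p\<in>P. toF P Y p \<in> ?B p)"
    have "abs ` Y \<subseteq> X"
    proof
      fix q assume q: "q \<in> abs ` Y"
      then have "q \<in> P" using sig_abs_sub[of Y P] A pos by auto
      then show "q \<in> X" using A q toF_nz[of Y q] by (auto split: if_splits)
    qed
    then show "Y \<in> Sig P \<and> abs ` Y \<subseteq> X" using A by auto
  qed
  have "card {Y\<in>Sig P. \<forall>p\<in>P. toF P Y p \<in> ?B p} = (\<Prod>p\<in>P. card (?B p))"
    by (rule sig_count[OF fin pos]) auto
  also have "\<dots> = (\<Prod>p\<in>P. if p \<in> X then 3 else 1)" by (rule prod.cong) auto
  also have "\<dots> = 3 ^ card X" using prod_if_subset[OF fin X, of 3 1] by simp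
  finally have c: "card {Y\<in>Sig P. abs ` Y \<subseteq> X} = 3 ^ card X" using e by simp
  have "{Y\<in>Sig P. Y \<noteq> {} \<and> abs ` Y \<subseteq> X} = {Y\<in>Sig P. abs ` Y \<subseteq> X} - {{}}" by auto
  moreover have "{} \<in> {Y\<in>Sig P. abs ` Y \<subseteq> X}" by (auto simp: Sig_def)
  moreover have "finite {Y\<in>Sig P. abs ` Y \<subseteq> X}" using finS by auto
  ultimately show ?thesis using c by (simp add: card_Diff_singleton)
qed

lemma count_sup:
  assumes X: "X \<subseteq> P" "X \<noteq> {}"
  shows "card {Y\<in>Sig P. Y \<noteq> {} \<and> X \<subseteq> abs ` Y} = 2 ^ card X * 3 ^ (card P - card X)"
proof -
  let ?B = "\<lambda>p. if p \<in> X then {1::nat,2} else {0,1,2}"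
  have e: "{Y\<in>Sig P. Y \<noteq> {} \<and> X \<subseteq> abs ` Y} = {Y\<in>Sig P. \<forall>p\<in>P. toF P Y p \<in> ?B p}"
  proof (rule Collect_cong, rule iffI)
    fix Y assume A: "Y \<in> Sig P \<and> Y \<noteq> {} \<and> X \<subseteq> abs ` Y"
    show "Y \<in> Sig P \<and> (\<forall>p\<in>P. toF P Y p \<in> ?B p)"
    proof (intro conjI ballI)
      fix p assume p: "p \<in> P"
      show "toF P Y p \<in> ?B p" using toF_range[of Y p] toF_nz[of Y p] A p by auto
    qed (use A in auto)
  next
    fix Y assume A: "Y \<in> Sig P \<and> (\<forall>p\<in>P. toF P Y p \<in> ?B p)"
    have "X \<subseteq> abs ` Y"
    proof
      fix q assume q: "q \<in> X"
      then have "q \<in> P" using X by auto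
      then show "q \<in> abs ` Y" using A q toF_nz[of Y q] by force
    qed
    then show "Y \<in> Sig P \<and> Y \<noteq> {} \<and> X \<subseteq> abs ` Y" using A X by auto
  qed
  have "card {Y\<in>Sig P. \<forall>p\<in>P. toF P Y p \<in> ?B p} = (\<Prod>p\<in>P. card (?B p))"
    by (rule sig_count[OF fin pos]) auto
  also have "\<dots> = (\<Prod>p\<in>P. if p \<in> X then 2 else 3)" by (rule prod.cong) auto
  also have "\<dots> = 2 ^ card X * 3 ^ (card P - card X)" using prod_if_subset[OF fin X(1)] by simp
  finally show ?thesis using e by simp
qed

lemma count_eq:
  assumes X: "X \<subseteq> P" "X \<noteq> {}"
  shows "card {Y\<in>Sig P. Y \<noteq> {} \<and> abs ` Y = X} = 2 ^ card X"
proof -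
  let ?B = "\<lambda>p. if p \<in> X then {1::nat,2} else {0}"
  have e: "{Y\<in>Sig P. Y \<noteq> {} \<and> abs ` Y = X} = {Y\<in>Sig P. \<forall>p\<in>P. toF P Y p \<in> ?B p}"
  proof (rule Collect_cong, rule iffI)
    fix Y assume A: "Y \<in> Sig P \<and> Y \<noteq> {} \<and> abs ` Y = X"
    show "Y \<in> Sig P \<and> (\<forall>p\<in>P. toF P Y p \<in> ?B p)"
    proof (intro conjI ballI)
      fix p assume p: "p \<in> P"
      show "toF P Y p \<in> ?B p" using toF_range[of Y p] toF_nz[of Y p] A p by auto
    qed (use A in auto)
  next
    fix Y assume A: "Y \<in> Sig P \<and> (\<forall>p\<in>P. toF P Y p \<in> ?B p)"
    have "abs ` Y = X"
    proof
      show "X \<subseteq> abs ` Y"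
      proof
        fix q assume q: "q \<in> X"
        then have "q \<in> P" using X by auto
        then show "q \<in> abs ` Y" using A q toF_nz[of Y q] by force
      qed
      show "abs ` Y \<subseteq> X"
      proof
        fix q assume q: "q \<in> abs ` Y"
        then have "q \<in> P" using sig_abs_sub[of Y P] A pos by auto
        then show "q \<in> X" using A q toF_nz[of Y q] by (auto split: if_splits)
      qed
    qed
    then show "Y \<in> Sig P \<and> Y \<noteq> {} \<and> abs ` Y = X" using A X by auto
  qed
  have "card {Y\<in>Sig P. \<forall>p\<in>P. toF P Y p \<in> ?B p} = (\<Prod>p\<in>P. card (?B p))"
    by (rule sig_count[OF fin pos]) auto
  also have "\<dots> = (\<Prod>p\<in>P. if p \<in> X then 2 else 1)" by (rule prod.cong) auto
  also have "\<dots> = 2 ^ card X" using prod_if_subset[OF fin X(1), of 2 1] by simp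
  finally show ?thesis using e by simp
qed

end


locale hb =
  fixes n k :: nat and x :: "nat \<Rightarrow> real"
  assumes n2: "n > 2" and k1: "1 < k" and kn: "k < n"
    and xpos: "\<forall>i. 1 \<le> i \<and> i \<le> n \<longrightarrow> 0 < x i"
    and xmono: "\<forall>i j. 1 \<le> i \<and> i < j \<and> j \<le> n \<longrightarrow> x i < x j"
begin

abbreviation "P \<equiv> Bn_plus n x"

lemma P_eq: "P = x ` {1..n}"
  unfolding Bn_plus_def by auto

lemma x_inj: "inj_on x {1..n}"
proof (rule inj_onI)
  fix i j assume "i \<in> {1..n}" "j \<in> {1..n}" "x i = x j"
  then show "i = j" using xmono by (metis atLeastAtMost_iff less_irrefl linorder_neqE_nat)
qed

lemma cardP: "card P = n"
  using P_eq x_inj by (simp add: card_image)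

lemma finP: "finite P" using P_eq by simp

lemma posP: "\<forall>p\<in>P. 0 < p" using P_eq xpos by auto

sublocale sigctx P using finP posP by unfold_locales

lemma phi_eq: "phiB n x = {Y\<in>Sig P. Y \<noteq> {} \<and> maxpos Y}"
proof (rule set_eqI, rule iffI)
  fix Y assume "Y \<in> phiB n x"
  moreover have "Bn n x \<subseteq> P \<union> uminus ` P"
  proof
    fix y assume "y \<in> Bn n x"
    then have "y \<in> P \<or> (\<exists>i. 1 \<le> i \<and> i \<le> n - 1 \<and> y = - x i)"
      unfolding Bn_def Bn_plus_def by auto
    then show "y \<in> P \<union> uminus ` P"
    proof
      assume "\<exists>i. 1 \<le> i \<and> i \<le> n - 1 \<and> y = - x i"
      then obtain i where i: "1 \<le> i" "i \<le> n - 1" "y = - x i" by auto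
      then have "x i \<in> P" unfolding Bn_plus_def by auto
      then show ?thesis using i by auto
    qed auto
  qed
  ultimately show "Y \<in> {Y\<in>Sig P. Y \<noteq> {} \<and> maxpos Y}"
    unfolding phiB_def Sig_def maxpos_def by blast
next
  fix Y assume Y: "Y \<in> {Y\<in>Sig P. Y \<noteq> {} \<and> maxpos Y}"
  then obtain a where a: "a \<in> Y" "0 < a" "\<forall>b\<in>Y. \<bar>b\<bar> \<le> \<bar>a\<bar>" unfolding maxpos_def by auto
  have inj: "inj_on abs Y" and sub: "Y \<subseteq> P \<union> uminus ` P" using Y unfolding Sig_def by auto
  have "Y \<subseteq> Bn n x"
  proof
    fix y assume y: "y \<in> Y"
    have "y \<in> P \<or> (\<exists>i. 1 \<le> i \<and> i \<le> n \<and> y = - x i)"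
    proof (cases "y \<in> P")
      case False
      then obtain p where "p \<in> P" "y = - p" using sub y by auto
      then show ?thesis using P_eq by auto
    qed auto
    then show "y \<in> Bn n x"
    proof
      assume "y \<in> P" then show ?thesis unfolding Bn_def Bn_plus_def by auto
    next
      assume "\<exists>i. 1 \<le> i \<and> i \<le> n \<and> y = - x i"
      then obtain i where i: "1 \<le> i" "i \<le> n" "y = - x i" by auto
      show ?thesis
      proof (cases "i \<le> n - 1")
        case True then show ?thesis using i unfolding Bn_def by auto
      next
        case False
        then have iN: "i = n" using i by auto
        have "a \<in> P"
        proof (rule ccontr)
          assume "a \<notin> P"
          then obtain p where "p \<in> P" "a = - p" using sub a by auto
          then show False using posP a by auto
        qed
        then obtain j where j: "1 \<le> j" "j \<le> n" "a = x j" using P_eq by auto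
        have "\<bar>y\<bar> \<le> \<bar>a\<bar>" using a(3) y by auto
        moreover have "\<bar>y\<bar> = x n" using i iN xpos by auto
        ultimately have "x n \<le> a" using a(2) by auto
        moreover have "x j \<le> x n"
        proof (cases "j = n")
          case False
          then have "j < n" using j by auto
          then show ?thesis using j xmono by force
        qed auto
        ultimately have "a = x n" using j by auto
        then have "\<bar>a\<bar> = \<bar>y\<bar>" using i iN by auto
        then have "a = y" using inj a(1) y by (meson inj_onD)
        then show ?thesis using a i xpos by auto
      qed
    qed
  qed
  then show "Y \<in> phiB n x" using Y a inj unfolding phiB_def by auto
qed

lemma V1_eq: "V1 n k x = {S. S \<subseteq> P \<and> card S = k}" unfolding V1_def by simp

lemma cardV1: "card (V1 n k x) = n choose k"
  using n_subsets[OF finP, of k] cardP V1_eq by simp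

lemma pos_in_phi:
  assumes "S \<subseteq> P" "S \<noteq> {}"
  shows "S \<in> phiB n x"
proof -
  have fS: "finite S" using assms finP finite_subset by auto
  have "inj_on abs S" using assms posP by (intro inj_onI) (metis abs_of_pos subsetD)
  then have "S \<in> Sig P" using assms unfolding Sig_def by auto
  moreover have "maxpos S"
  proof -
  have M: "Max S \<in> S" using fS assms by auto
  have "\<forall>b\<in>S. \<bar>b\<bar> \<le> \<bar>Max S\<bar>"
  proof
    fix b assume b: "b \<in> S"
    have "b \<le> Max S" using fS b by auto
    moreover have "0 < b" "0 < Max S" using b M assms posP by auto
    ultimately show "\<bar>b\<bar> \<le> \<bar>Max S\<bar>" by simp
  qed
  then show "maxpos S" unfolding maxpos_def using M assms posP by auto
  qed
  ultimately show ?thesis using phi_eq assms by auto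
qed

lemma V1_sub: "V1 n k x \<subseteq> phiB n x"
proof
  fix S assume "S \<in> V1 n k x"
  then have "S \<subseteq> P" "card S = k" using V1_eq by auto
  then show "S \<in> phiB n x" using pos_in_phi k1 by (intro pos_in_phi) auto
qed

lemma finphi: "finite (phiB n x)" using phi_eq finS by auto

lemma card_phi: "2 * card (phiB n x) = 3 ^ n - 1"
  using halving[of "\<lambda>_. True"] count_all phi_eq cardP by simp

lemma V2_eq: "V2 n k x = phiB n x - V1 n k x" unfolding V2_def by simp

lemma cardV2: "card (V2 n k x) = card (phiB n x) - (n choose k)"
  using V2_eq V1_sub cardV1 finphi by (simp add: card_Diff_subset finite_subset)

lemma disj: "V1 n k x \<inter> V2 n k x = {}" using V2_eq by auto

lemma W_eq: "HB_verts n k x = phiB n x" using V1_sub V2_eq unfolding HB_verts_def by auto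

abbreviation "E \<equiv> HB_edges n k x"

lemma E_iff: "(u, v) \<in> E \<longleftrightarrow> HB_adj n k x u v" unfolding HB_edges_def by simp

lemma adj_V1: "X \<in> V1 n k x \<Longrightarrow> (X, Y) \<in> E \<longleftrightarrow> Y \<in> V2 n k x \<and> (X \<subseteq> abs ` Y \<or> abs ` Y \<subseteq> X)"
  using disj unfolding E_iff HB_adj_def by auto

lemma E_sides: "(u, v) \<in> E \<Longrightarrow> (u \<in> V1 n k x \<and> v \<in> V2 n k x) \<or> (u \<in> V2 n k x \<and> v \<in> V1 n k x)"
  unfolding E_iff HB_adj_def by auto

lemma E_sym: "(u, v) \<in> E \<Longrightarrow> (v, u) \<in> E"
  unfolding E_iff HB_adj_def by auto

lemma parity:
  "(u, v) \<in> E ^^ m \<Longrightarrow> u \<in> V1 n k x \<union> V2 n k x \<Longrightarrow>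
     v \<in> V1 n k x \<union> V2 n k x \<and> (v \<in> V1 n k x \<longleftrightarrow> (u \<in> V1 n k x \<longleftrightarrow> even m))"
proof (induction m arbitrary: v)
  case 0 then show ?case by auto
next
  case (Suc m)
  from Suc.prems(1) obtain w where w: "(u, w) \<in> E ^^ m" "(w, v) \<in> E" by (auto elim: relpow_Suc_E)
  from Suc.IH[OF w(1) Suc.prems(2)] E_sides[OF w(2)] disj show ?case by auto
qed

lemma pow_sym: "(u, v) \<in> E ^^ m \<Longrightarrow> (v, u) \<in> E ^^ m"
proof (induction m arbitrary: v)
  case 0 then show ?case by auto
next
  case (Suc m)
  from Suc.prems(1) obtain w where w: "(u, w) \<in> E ^^ m" "(w, v) \<in> E" by (auto elim: relpow_Suc_E)
  show ?case by (rule relpow_Suc_I2[OF E_sym[OF w(2)] Suc.IH[OF w(1)]])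
qed

lemma dist_sym: "HB_dist_eq n k x u v h \<Longrightarrow> HB_dist_eq n k x v u h"
  unfolding HB_dist_eq_def using pow_sym by blast

lemma dist_uniq: "HB_dist_eq n k x u v h \<Longrightarrow> HB_dist_eq n k x u v h' \<Longrightarrow> h = h'"
  unfolding HB_dist_eq_def by (metis linorder_neqE_nat)

lemma dist_pow: "HB_dist_eq n k x u v h \<Longrightarrow> (u, v) \<in> E ^^ h"
  unfolding HB_dist_eq_def by simp

lemma P_V2: "P \<in> V2 n k x"
proof -
  have "P \<noteq> {}" using cardP n2 by auto
  then have "P \<in> phiB n x" using pos_in_phi by auto
  moreover have "P \<notin> V1 n k x" using V1_eq cardP kn by auto
  ultimately show ?thesis using V2_eq by auto
qed

lemma absP: "abs ` P = P" using posP by force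

lemma V1_pow2: "X \<in> V1 n k x \<Longrightarrow> X' \<in> V1 n k x \<Longrightarrow> (X, X') \<in> E ^^ 2"
proof -
  assume X: "X \<in> V1 n k x" and X': "X' \<in> V1 n k x"
  have "(X, P) \<in> E" using adj_V1[OF X] P_V2 absP X V1_eq by auto
  moreover have "(X', P) \<in> E" using adj_V1[OF X'] P_V2 absP X' V1_eq by auto
  ultimately show "(X, X') \<in> E ^^ 2"
    by (metis E_sym One_nat_def numeral_2_eq_2 relpow_1 relpow_Suc_I)
qed

lemma nbr: "Y \<in> V2 n k x \<Longrightarrow> \<exists>X\<in>V1 n k x. (X, Y) \<in> E"
proof -
  assume Y: "Y \<in> V2 n k x"
  then have YS: "Y \<in> Sig P" using V2_eq phi_eq by auto
  have sub: "abs ` Y \<subseteq> P" using sig_abs_sub[OF YS posP] .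
  have fA: "finite (abs ` Y)" using sub finP finite_subset by auto
  obtain X where X: "X \<subseteq> P" "card X = k" "X \<subseteq> abs ` Y \<or> abs ` Y \<subseteq> X"
  proof (cases "k \<le> card (abs ` Y)")
    case True
    then obtain X where "X \<subseteq> abs ` Y" "card X = k" by (rule obtain_subset_with_card_n)
    then show ?thesis using that[of X] sub by blast
  next
    case False
    have "card (P - abs ` Y) = n - card (abs ` Y)" using sub cardP fA by (simp add: card_Diff_subset)
    then have "k - card (abs ` Y) \<le> card (P - abs ` Y)" using kn by auto
    then obtain T where T: "T \<subseteq> P - abs ` Y" "card T = k - card (abs ` Y)" "finite T"
      by (rule obtain_subset_with_card_n)
    have "card (abs ` Y \<union> T) = card (abs ` Y) + card T"
      using T fA by (intro card_Un_disjoint) auto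
    then have "card (abs ` Y \<union> T) = k" using T False by auto
    then show ?thesis using that[of "abs ` Y \<union> T"] sub T by auto
  qed
  then have "X \<in> V1 n k x" using V1_eq by auto
  then show ?thesis using adj_V1 X Y by auto
qed

lemma D1: "X \<in> V1 n k x \<Longrightarrow> (X, Y) \<in> E \<Longrightarrow> HB_dist_eq n k x X Y 1"
  unfolding HB_dist_eq_def using E_sides disj by fastforce

lemma D1_iff: "X \<in> V1 n k x \<Longrightarrow> HB_dist_eq n k x X Y 1 \<longleftrightarrow> (X, Y) \<in> E"
  using D1 dist_pow by fastforce

lemma D3:
  assumes X: "X \<in> V1 n k x" and Y: "Y \<in> V2 n k x" and nE: "(X, Y) \<notin> E"
  shows "HB_dist_eq n k x X Y 3"
proof -
  obtain X' where X': "X' \<in> V1 n k x" "(X', Y) \<in> E" using nbr[OF Y] by auto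
  have "(X, X') \<in> E ^^ 2" using V1_pow2 X X' by auto
  then have "(X, Y) \<in> E ^^ Suc 2" by (rule relpow_Suc_I[OF _ X'(2)])
  moreover have "(X, Y) \<notin> E ^^ m" if "m < 3" for m
  proof
    assume m: "(X, Y) \<in> E ^^ m"
    have "m = 0 \<or> m = 1 \<or> m = 2" using that by auto
    then show False
    proof (elim disjE)
      assume "m = 0" then show False using m X Y disj by auto
    next
      assume "m = 1" then show False using m nE by auto
    next
      assume "m = 2" then show False using parity[OF m] X Y disj by auto
    qed
  qed
  ultimately show ?thesis unfolding HB_dist_eq_def by (simp add: numeral_3_eq_3)
qed

lemma D3_iff:
  assumes X: "X \<in> V1 n k x" and Y: "Y \<in> V2 n k x"
  shows "HB_dist_eq n k x X Y 3 \<longleftrightarrow> (X, Y) \<notin> E"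
proof
  assume "HB_dist_eq n k x X Y 3"
  then have "\<forall>m<3. (X, Y) \<notin> E ^^ m" unfolding HB_dist_eq_def by simp
  then have "(X, Y) \<notin> E ^^ 1" by (metis less_numeral_extra(4) one_less_numeral_iff semiring_norm(77))
  then show "(X, Y) \<notin> E" by simp
qed (rule D3[OF X Y])

lemma D_V1: "X \<in> V1 n k x \<Longrightarrow> X' \<in> V1 n k x \<Longrightarrow> X \<noteq> X' \<Longrightarrow> HB_dist_eq n k x X X' 2"
proof -
  assume X: "X \<in> V1 n k x" and X': "X' \<in> V1 n k x" and ne: "X \<noteq> X'"
  have "(X, X') \<notin> E ^^ m" if "m < 2" for m
  proof
    assume m: "(X, X') \<in> E ^^ m"
    have "m = 0 \<or> m = 1" using that by auto
    then show False
    proof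
      assume "m = 0" then show False using m ne by auto
    next
      assume "m = 1" then show False using parity[OF m] X X' by auto
    qed
  qed
  then show ?thesis unfolding HB_dist_eq_def using V1_pow2[OF X X'] by auto
qed

lemma D_V2:
  assumes Y: "Y \<in> V2 n k x" and Y': "Y' \<in> V2 n k x" and ne: "Y \<noteq> Y'"
  shows "HB_dist_eq n k x Y Y' 2 \<or> HB_dist_eq n k x Y Y' 4"
proof -
  have no01: "(Y, Y') \<notin> E ^^ m" if "m = 0 \<or> m = 1 \<or> m = 3" for m
  proof
    assume m: "(Y, Y') \<in> E ^^ m"
    from that show False
    proof (elim disjE)
      assume "m = 0" then show False using m ne by auto
    next
      assume "m = 1" then show False using parity[OF m] Y Y' disj by auto
    next
      assume "m = 3" then show False using parity[OF m] Y Y' disj by auto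
    qed
  qed
  obtain X where X: "X \<in> V1 n k x" "(X, Y) \<in> E" using nbr[OF Y] by auto
  obtain X' where X': "X' \<in> V1 n k x" "(X', Y') \<in> E" using nbr[OF Y'] by auto
  have YX: "(Y, X) \<in> E" using E_sym X by auto
  have reach: "(Y, Y') \<in> E ^^ 2 \<or> (Y, Y') \<in> E ^^ 4"
  proof (cases "X = X'")
    case True
    have "(Y, X) \<in> E ^^ 1" using YX by simp
    then have "(Y, Y') \<in> E ^^ Suc 1" using X'(2) True by (intro relpow_Suc_I[of _ X]) auto
    then show ?thesis by (simp add: numeral_2_eq_2)
  next
    case False
    have "(X, X') \<in> E ^^ 2" using V1_pow2 X X' by auto
    then have "(Y, X') \<in> E ^^ Suc 2" by (rule relpow_Suc_I2[OF YX])
    then have "(Y, Y') \<in> E ^^ Suc (Suc 2)" by (rule relpow_Suc_I[OF _ X'(2)])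
    then show ?thesis by (simp add: numeral_eq_Suc)
  qed
  show ?thesis
  proof (cases "(Y, Y') \<in> E ^^ 2")
    case True
    have "(Y, Y') \<notin> E ^^ m" if "m < 2" for m
    proof -
      have "m = 0 \<or> m = 1" using that by auto
      then show ?thesis using no01 by blast
    qed
    then show ?thesis using True unfolding HB_dist_eq_def by auto
  next
    case False
    then have R: "(Y, Y') \<in> E ^^ 4" using reach by auto
    have "(Y, Y') \<notin> E ^^ m" if "m < 4" for m
    proof -
      have "m = 0 \<or> m = 1 \<or> m = 2 \<or> m = 3" using that by auto
      then show ?thesis using no01 False by auto
    qed
    then show ?thesis using R unfolding HB_dist_eq_def by auto
  qed
qed

end


context hb
begin

lemma doubles_eq: "{{u, v} | u v. u \<in> A \<and> v \<in> A \<and> u \<noteq> v} = {B. B \<subseteq> A \<and> card B = 2}"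
proof
  show "{{u, v} | u v. u \<in> A \<and> v \<in> A \<and> u \<noteq> v} \<subseteq> {B. B \<subseteq> A \<and> card B = 2}"
  proof
    fix s assume "s \<in> {{u, v} | u v. u \<in> A \<and> v \<in> A \<and> u \<noteq> v}"
    then obtain u v where "s = {u, v}" "u \<in> A" "v \<in> A" "u \<noteq> v" by blast
    then show "s \<in> {B. B \<subseteq> A \<and> card B = 2}" by simp
  qed
  show "{B. B \<subseteq> A \<and> card B = 2} \<subseteq> {{u, v} | u v. u \<in> A \<and> v \<in> A \<and> u \<noteq> v}"
  proof
    fix s assume "s \<in> {B. B \<subseteq> A \<and> card B = 2}"
    then obtain u v where "s = {u, v}" "u \<noteq> v" "s \<subseteq> A" by (auto simp: card_2_iff)
    then show "s \<in> {{u, v} | u v. u \<in> A \<and> v \<in> A \<and> u \<noteq> v}" by blast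
  qed
qed

lemma pairs_all:
  assumes "finite A" "\<forall>u\<in>A. \<forall>v\<in>A. u \<noteq> v \<longrightarrow> HB_dist_eq n k x u v h"
  shows "pairs_at_dist n k x A h = card A choose 2"
proof -
  have "{{u, v} | u v. u \<in> A \<and> v \<in> A \<and> u \<noteq> v \<and> HB_dist_eq n k x u v h} =
        {{u, v} | u v. u \<in> A \<and> v \<in> A \<and> u \<noteq> v}" (is "?L = ?R")
  proof
    show "?L \<subseteq> ?R" by blast
    show "?R \<subseteq> ?L"
    proof
      fix s assume "s \<in> ?R"
      then obtain u v where uv: "s = {u, v}" "u \<in> A" "v \<in> A" "u \<noteq> v" by blast
      then have "HB_dist_eq n k x u v h" using assms(2) by blast
      then show "s \<in> ?L" using uv by blast
    qed
  qed
  then show ?thesis unfolding pairs_at_dist_def doubles_eq using n_subsets[OF assms(1)] by simp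
qed

lemma finV1: "finite (V1 n k x)" using V1_sub finphi finite_subset by auto
lemma finV2: "finite (V2 n k x)" using V2_eq finphi by auto

lemma pairs_V1: "pairs_at_dist n k x (V1 n k x) 2 = (n choose k) choose 2"
  using pairs_all[OF finV1, of 2] D_V1 cardV1 by simp

lemma pairs_V2: "pairs_at_dist n k x (V2 n k x) 2 + pairs_at_dist n k x (V2 n k x) 4 = card (V2 n k x) choose 2"
proof -
  let ?A = "V2 n k x"
  let ?S = "\<lambda>h. {{u, v} | u v. u \<in> ?A \<and> v \<in> ?A \<and> u \<noteq> v \<and> HB_dist_eq n k x u v h}"
  have sub: "?S h \<subseteq> {{u, v} | u v. u \<in> ?A \<and> v \<in> ?A \<and> u \<noteq> v}" for h by blast
  have U: "?S 2 \<union> ?S 4 = {{u, v} | u v. u \<in> ?A \<and> v \<in> ?A \<and> u \<noteq> v}"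
  proof
    show "?S 2 \<union> ?S 4 \<subseteq> {{u, v} | u v. u \<in> ?A \<and> v \<in> ?A \<and> u \<noteq> v}" using sub by blast
    show "{{u, v} | u v. u \<in> ?A \<and> v \<in> ?A \<and> u \<noteq> v} \<subseteq> ?S 2 \<union> ?S 4"
    proof
      fix s assume "s \<in> {{u, v} | u v. u \<in> ?A \<and> v \<in> ?A \<and> u \<noteq> v}"
      then obtain u v where uv: "s = {u, v}" "u \<in> ?A" "v \<in> ?A" "u \<noteq> v" by blast
      then have "HB_dist_eq n k x u v 2 \<or> HB_dist_eq n k x u v 4" using D_V2[OF uv(2) uv(3) uv(4)] by simp
      then show "s \<in> ?S 2 \<union> ?S 4" using uv by blast
    qed
  qed
  have D: "?S 2 \<inter> ?S 4 = {}"
  proof (rule equals0I)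
    fix s assume s: "s \<in> ?S 2 \<inter> ?S 4"
    from s obtain a b where ab: "s = {a, b}" "HB_dist_eq n k x a b 2" by blast
    from s obtain c d where cd: "s = {c, d}" "HB_dist_eq n k x c d 4" by blast
    have "(a = c \<and> b = d) \<or> (a = d \<and> b = c)" using ab(1) cd(1) by (auto simp: doubleton_eq_iff)
    then have d4: "HB_dist_eq n k x a b 4" using cd(2) dist_sym by blast
    show False using dist_uniq[OF ab(2) d4] by simp
  qed
  have fin: "finite {B. B \<subseteq> ?A \<and> card B = 2}" using finV2 by auto
  have f2: "finite (?S 2)" "finite (?S 4)"
    using finite_subset[OF sub fin[folded doubles_eq]] by auto
  have "card (?S 2) + card (?S 4) = card (?S 2 \<union> ?S 4)"
    using card_Un_disjoint[OF f2 D] by simp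
  also have "\<dots> = card ?A choose 2" unfolding U doubles_eq using n_subsets[OF finV2] by simp
  finally show ?thesis unfolding pairs_at_dist_def by simp
qed

lemma pairs_odd:
  assumes h: "odd h"
  shows "pairs_at_dist n k x (HB_verts n k x) h =
    (\<Sum>X\<in>V1 n k x. card {Y\<in>V2 n k x. HB_dist_eq n k x X Y h})"
proof -
  let ?W = "HB_verts n k x"
  let ?S = "{{u, v} | u v. u \<in> ?W \<and> v \<in> ?W \<and> u \<noteq> v \<and> HB_dist_eq n k x u v h}"
  let ?G = "SIGMA X:V1 n k x. {Y\<in>V2 n k x. HB_dist_eq n k x X Y h}"
  have W: "?W = V1 n k x \<union> V2 n k x" unfolding HB_verts_def by simp
  have SG: "?S = (\<lambda>(X, Y). {X, Y}) ` ?G"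
  proof
    show "?S \<subseteq> (\<lambda>(X, Y). {X, Y}) ` ?G"
    proof
      fix s assume "s \<in> ?S"
      then obtain u v where uv: "s = {u, v}" "u \<in> ?W" "v \<in> ?W" "u \<noteq> v" "HB_dist_eq n k x u v h" by blast
      have uW: "u \<in> V1 n k x \<union> V2 n k x" using uv(2) W by simp
      have par: "v \<in> V1 n k x \<longleftrightarrow> u \<notin> V1 n k x"
        using parity[OF dist_pow[OF uv(5)] uW] h by simp
      have vW: "v \<in> V1 n k x \<union> V2 n k x" using uv(3) W by simp
      show "s \<in> (\<lambda>(X, Y). {X, Y}) ` ?G"
      proof (cases "u \<in> V1 n k x")
        case True
        then have "v \<in> V2 n k x" using par vW by blast
        then have G: "(u, v) \<in> ?G" using True uv(5) by blast
        have "s = (\<lambda>(X, Y). {X, Y}) (u, v)" using uv(1) by simp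
        then show ?thesis using G by (rule image_eqI)
      next
        case False
        then have "v \<in> V1 n k x" "u \<in> V2 n k x" using par uW by blast+
        then have G: "(v, u) \<in> ?G" using dist_sym[OF uv(5)] by blast
        have "s = (\<lambda>(X, Y). {X, Y}) (v, u)" using uv(1) by (simp add: insert_commute)
        then show ?thesis using G by (rule image_eqI)
      qed
    qed
    show "(\<lambda>(X, Y). {X, Y}) ` ?G \<subseteq> ?S"
    proof
      fix s assume "s \<in> (\<lambda>(X, Y). {X, Y}) ` ?G"
      then obtain g where g: "g \<in> ?G" "s = (\<lambda>(X, Y). {X, Y}) g" by (rule imageE)
      obtain X Y where gXY: "g = (X, Y)" by (cases g)
      have XY: "s = {X, Y}" "X \<in> V1 n k x" "Y \<in> V2 n k x" "HB_dist_eq n k x X Y h"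
        using g gXY by auto
      then have "X \<noteq> Y" using disj by blast
      moreover have "X \<in> ?W" "Y \<in> ?W" using XY W by simp_all
      ultimately show "s \<in> ?S" using XY by blast
    qed
  qed
  have inj: "inj_on (\<lambda>(X, Y). {X, Y}) ?G"
  proof (rule inj_onI)
    fix a b assume a: "a \<in> ?G" and b: "b \<in> ?G" and e: "(\<lambda>(X, Y). {X, Y}) a = (\<lambda>(X, Y). {X, Y}) b"
    obtain X Y where aa0: "a = (X, Y)" by (cases a)
    obtain X' Y' where bb0: "b = (X', Y')" by (cases b)
    have aa: "a = (X, Y)" "X \<in> V1 n k x" "Y \<in> V2 n k x" using a aa0 by auto
    have bb: "b = (X', Y')" "X' \<in> V1 n k x" "Y' \<in> V2 n k x" using b bb0 by auto
    have "{X, Y} = {X', Y'}" using e aa(1) bb(1) by simp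
    then have "(X = X' \<and> Y = Y') \<or> (X = Y' \<and> Y = X')" by (auto simp: doubleton_eq_iff)
    then show "a = b" using aa bb disj by blast
  qed
  have c1: "card ((\<lambda>(X, Y). {X, Y}) ` ?G) = card ?G" by (rule card_image[OF inj])
  have fin2: "\<forall>a\<in>V1 n k x. finite {Y\<in>V2 n k x. HB_dist_eq n k x a Y h}" using finV2 by simp
  have c2: "card ?G = (\<Sum>X\<in>V1 n k x. card {Y\<in>V2 n k x. HB_dist_eq n k x X Y h})"
    by (rule card_SigmaI[OF finV1 fin2])
  have "pairs_at_dist n k x (HB_verts n k x) h = card ?S" unfolding pairs_at_dist_def by (rule refl)
  also have "\<dots> = card ((\<lambda>(X, Y). {X, Y}) ` ?G)" by (subst SG) (rule refl)
  also have "\<dots> = card ?G" by (rule c1)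
  also have "\<dots> = (\<Sum>X\<in>V1 n k x. card {Y\<in>V2 n k x. HB_dist_eq n k x X Y h})" by (rule c2)
  finally show ?thesis .
qed

lemma deg:
  assumes X: "X \<in> V1 n k x"
  shows "2 * card {Y\<in>V2 n k x. (X, Y) \<in> E} + 2 + 2 ^ k = (3 ^ k - 1) + 2 ^ k * 3 ^ (n - k)"
proof -
  have XP: "X \<subseteq> P" and cX: "card X = k" using X V1_eq by auto
  have Xne: "X \<noteq> {}" using cX k1 by auto
  have absX: "abs ` X = X" using XP posP by force
  define A where "A = {Y\<in>Sig P. Y \<noteq> {} \<and> abs ` Y \<subseteq> X \<and> maxpos Y}"
  define B where "B = {Y\<in>Sig P. Y \<noteq> {} \<and> X \<subseteq> abs ` Y \<and> maxpos Y}"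
  define C where "C = {Y\<in>Sig P. Y \<noteq> {} \<and> abs ` Y = X \<and> maxpos Y}"
  have hA: "2 * card A = card {Y\<in>Sig P. Y \<noteq> {} \<and> abs ` Y \<subseteq> X}"
    unfolding A_def by (rule halving[of "\<lambda>T. T \<subseteq> X"])
  have cA: "2 * card A = 3 ^ k - 1" using hA count_sub[OF XP] cX by simp
  have hB: "2 * card B = card {Y\<in>Sig P. Y \<noteq> {} \<and> X \<subseteq> abs ` Y}"
    unfolding B_def by (rule halving[of "\<lambda>T. X \<subseteq> T"])
  have cB: "2 * card B = 2 ^ k * 3 ^ (n - k)" using hB count_sup[OF XP Xne] cX cardP by simp
  have hC: "2 * card C = card {Y\<in>Sig P. Y \<noteq> {} \<and> abs ` Y = X}"
    unfolding C_def by (rule halving[of "\<lambda>T. T = X"])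
  have cC: "2 * card C = 2 ^ k" using hC count_eq[OF XP Xne] cX by simp
  have AB: "A \<inter> B = C" unfolding A_def B_def C_def by blast
  have fA: "finite A" "finite B" unfolding A_def B_def using finS by auto
  have UI: "card (A \<union> B) + card C = card A + card B"
    using card_Un_Int[OF fA] AB by simp
  have Xphi: "X \<in> phiB n x" using V1_sub X by blast
  have Xin: "X \<in> A"
    using Xphi absX unfolding A_def phi_eq by simp
  have N: "{Y\<in>V2 n k x. (X, Y) \<in> E} = (A \<union> B) - {X}"
  proof (rule set_eqI, rule iffI)
    fix Y assume "Y \<in> {Y\<in>V2 n k x. (X, Y) \<in> E}"
    then have Y2: "Y \<in> V2 n k x" and rel: "X \<subseteq> abs ` Y \<or> abs ` Y \<subseteq> X" using adj_V1[OF X] by auto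
    have "Y \<in> phiB n x" "Y \<notin> V1 n k x" using Y2 V2_eq by auto
    then have "Y \<in> Sig P" "Y \<noteq> {}" "maxpos Y" "Y \<noteq> X" using phi_eq X by auto
    then show "Y \<in> (A \<union> B) - {X}" using rel unfolding A_def B_def by blast
  next
    fix Y assume Y: "Y \<in> (A \<union> B) - {X}"
    then have "Y \<in> Sig P" "Y \<noteq> {}" "maxpos Y" unfolding A_def B_def by auto
    then have Yphi: "Y \<in> phiB n x" using phi_eq by simp
    have rel: "X \<subseteq> abs ` Y \<or> abs ` Y \<subseteq> X" using Y unfolding A_def B_def by blast
    have "Y \<notin> V1 n k x"
    proof
      assume "Y \<in> V1 n k x"
      then have YP: "Y \<subseteq> P" and cY: "card Y = k" using V1_eq by auto
      have absY: "abs ` Y = Y" using YP posP by force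
      have fX: "finite X" "finite Y" using XP YP finP finite_subset by auto
      have "Y = X" using rel absY cX cY fX by (metis card_subset_eq)
      then show False using Y by auto
    qed
    then have "Y \<in> V2 n k x" using Yphi V2_eq by auto
    then show "Y \<in> {Y\<in>V2 n k x. (X, Y) \<in> E}" using adj_V1[OF X] rel by auto
  qed
  have fAB: "finite (A \<union> B)" using fA by auto
  have XAB: "X \<in> A \<union> B" using Xin by simp
  have "card {Y\<in>V2 n k x. (X, Y) \<in> E} = card (A \<union> B) - 1"
    unfolding N using XAB fAB by (simp add: card_Diff_singleton)
  moreover have "card (A \<union> B) \<ge> 1" using XAB fAB by (metis One_nat_def Suc_leI card_gt_0_iff empty_iff)
  ultimately show ?thesis using cA cB cC UI by linarith
qed

end


theorem mainTheorem15:
  fixes n k :: nat and x :: "nat \<Rightarrow> real"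
  assumes "n > 2" and "1 < k" and "k < n"
    and "\<forall>i. 1 \<le> i \<and> i \<le> n \<longrightarrow> 0 < x i"
    and "\<forall>i j. 1 \<le> i \<and> i < j \<and> j \<le> n \<longrightarrow> x i < x j"
  shows "int (pairs_at_dist n k x (HB_verts n k x) 1) =
           int (n choose k) * ((3 ^ k - 3) div 2 + 2 ^ (k - 1) * (3 ^ (n - k) - 1)) \<and>
         int (pairs_at_dist n k x (HB_verts n k x) 3) =
           int (n choose k) * ((3 ^ n - 1) div 2 - int (n choose k) - (3 ^ k - 3) div 2
                               - 2 ^ (k - 1) * (3 ^ (n - k) - 1)) \<and>
         pairs_at_dist n k x (V1 n k x) 2 = (n choose k) choose 2 \<and>
         int (pairs_at_dist n k x (V2 n k x) 2) + int (pairs_at_dist n k x (V2 n k x) 4) =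
           int ((((3 ^ n - 1) div 2) - (n choose k)) choose 2)"
proof -
  interpret hb n k x using assms by unfold_locales
  define C where "C = n choose k"
  define d :: nat where "d = (3 ^ k - 1 + 2 ^ k * 3 ^ (n - k) - 2 - 2 ^ k) div 2"
  have degd: "card {Y\<in>V2 n k x. (X, Y) \<in> E} = d" if X: "X \<in> V1 n k x" for X
  proof -
    let ?c = "card {Y\<in>V2 n k x. (X, Y) \<in> E}"
    have e: "2 * ?c = 3 ^ k - 1 + 2 ^ k * 3 ^ (n - k) - 2 - 2 ^ k" using deg[OF X] by linarith
    have "?c = (2 * ?c) div 2" by simp
    then show ?thesis unfolding d_def e .
  qed
  have deq: "2 * d + 2 + 2 ^ k = 3 ^ k - 1 + 2 ^ k * 3 ^ (n - k)"
  proof -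
    have "card (V1 n k x) > 0" using cardV1 kn by simp
    then have "V1 n k x \<noteq> {}" by (auto simp: card_gt_0_iff)
    then obtain X where X: "X \<in> V1 n k x" by auto
    show ?thesis using deg[OF X] degd[OF X] by simp
  qed
  have dle: "d \<le> card (V2 n k x)"
  proof -
    have "card (V1 n k x) > 0" using cardV1 kn by simp
    then have "V1 n k x \<noteq> {}" by (auto simp: card_gt_0_iff)
    then obtain X where X: "X \<in> V1 n k x" by auto
    have "card {Y\<in>V2 n k x. (X, Y) \<in> E} \<le> card (V2 n k x)" using finV2 by (intro card_mono) auto
    then show ?thesis using degd[OF X] by simp
  qed
  have p1: "pairs_at_dist n k x (HB_verts n k x) 1 = C * d"
  proof -
    have "pairs_at_dist n k x (HB_verts n k x) 1 = (\<Sum>X\<in>V1 n k x. card {Y\<in>V2 n k x. HB_dist_eq n k x X Y 1})"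
      by (rule pairs_odd) simp
    also have "\<dots> = (\<Sum>X\<in>V1 n k x. d)"
    proof (rule sum.cong[OF refl])
      fix X assume X: "X \<in> V1 n k x"
      have "{Y\<in>V2 n k x. HB_dist_eq n k x X Y 1} = {Y\<in>V2 n k x. (X, Y) \<in> E}" using D1_iff[OF X] by blast
      then show "card {Y\<in>V2 n k x. HB_dist_eq n k x X Y 1} = d" using degd[OF X] by simp
    qed
    finally show ?thesis using cardV1 C_def by simp
  qed
  have p3: "pairs_at_dist n k x (HB_verts n k x) 3 = C * (card (V2 n k x) - d)"
  proof -
    have "pairs_at_dist n k x (HB_verts n k x) 3 = (\<Sum>X\<in>V1 n k x. card {Y\<in>V2 n k x. HB_dist_eq n k x X Y 3})"
      by (rule pairs_odd) simp
    also have "\<dots> = (\<Sum>X\<in>V1 n k x. card (V2 n k x) - d)"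
    proof (rule sum.cong[OF refl])
      fix X assume X: "X \<in> V1 n k x"
      have "{Y\<in>V2 n k x. HB_dist_eq n k x X Y 3} = V2 n k x - {Y\<in>V2 n k x. (X, Y) \<in> E}"
        using D3_iff[OF X] by blast
      then show "card {Y\<in>V2 n k x. HB_dist_eq n k x X Y 3} = card (V2 n k x) - d"
        using degd[OF X] finV2 by (simp add: card_Diff_subset)
    qed
    finally show ?thesis using cardV1 C_def by simp
  qed
  define cp where "cp = card (phiB n x)"
  have cp2: "2 * cp = 3 ^ n - 1" using card_phi cp_def by simp
  have cpn: "cp = (3 ^ n - 1) div 2" using cp2 by auto
  have Ccp: "C \<le> cp" unfolding C_def cp_def using cardV1 card_mono[OF finphi V1_sub] by simp
  have cV2: "card (V2 n k x) = cp - C" using cardV2 cp_def C_def by simp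
  define a :: int where "a = 3 ^ k"
  define b :: int where "b = 2 ^ (k - 1)"
  define c :: int where "c = 3 ^ (n - k)"
  define q :: int where "q = (3 ^ k - 3) div 2"
  have kk: "k = Suc (k - 1)" using k1 by simp
  have two_k: "(2::int) ^ k = 2 * b"
  proof -
    have "(2::int) ^ k = 2 ^ Suc (k - 1)" using kk by simp
    also have "\<dots> = 2 * b" unfolding b_def by simp
    finally show ?thesis .
  qed
  have oddk: "odd a" unfolding a_def by simp
  have q2: "2 * q = a - 3" unfolding q_def a_def[symmetric] using oddk by (simp add: even_diff)
  have dint: "2 * int d + 2 + 2 * b = a - 1 + 2 * (b * c)"
  proof -
    have ge: "(1::nat) \<le> 3 ^ k" by simp
    have i1: "int (3 ^ k - 1) = 3 ^ k - 1" using ge by (simp add: of_nat_diff)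
    have "int (2 * d + 2 + 2 ^ k) = int (3 ^ k - 1) + int (2 ^ k * 3 ^ (n - k))"
      unfolding deq by (rule of_nat_add)
    then have "2 * int d + 2 + 2 ^ k = (3 ^ k - 1) + 2 ^ k * 3 ^ (n - k)" using i1 by simp
    then show ?thesis unfolding a_def c_def two_k by (simp add: algebra_simps)
  qed
  have dval: "int d = q + b * (c - 1)"
  proof -
    have "b * (c - 1) = b * c - b" by (simp add: algebra_simps)
    then show ?thesis using dint q2 by linarith
  qed
  have cpint: "int cp = (3 ^ n - 1) div 2"
  proof -
    have "int (2 * cp) = int (3 ^ n - 1)" using cp2 by simp
    then have "2 * int cp = 3 ^ n - 1" by (simp add: of_nat_diff)
    then show ?thesis by simp
  qed
  show ?thesis
  proof (intro conjI)
    show "int (pairs_at_dist n k x (HB_verts n k x) 1) =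
           int (n choose k) * ((3 ^ k - 3) div 2 + 2 ^ (k - 1) * (3 ^ (n - k) - 1))"
      unfolding p1 using dval unfolding C_def q_def b_def c_def by simp
    show "int (pairs_at_dist n k x (HB_verts n k x) 3) =
           int (n choose k) * ((3 ^ n - 1) div 2 - int (n choose k) - (3 ^ k - 3) div 2
                               - 2 ^ (k - 1) * (3 ^ (n - k) - 1))"
    proof -
      have "int (card (V2 n k x) - d) = int cp - int C - int d" using dle cV2 Ccp by simp
      then show ?thesis unfolding p3 using dval cpint unfolding C_def q_def b_def c_def by simp
    qed
    show "pairs_at_dist n k x (V1 n k x) 2 = (n choose k) choose 2" by (rule pairs_V1)
    show "int (pairs_at_dist n k x (V2 n k x) 2) + int (pairs_at_dist n k x (V2 n k x) 4) =
           int ((((3 ^ n - 1) div 2) - (n choose k)) choose 2)"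
    proof -
      have "int (pairs_at_dist n k x (V2 n k x) 2) + int (pairs_at_dist n k x (V2 n k x) 4) =
            int (pairs_at_dist n k x (V2 n k x) 2 + pairs_at_dist n k x (V2 n k x) 4)" by simp
      also have "\<dots> = int (card (V2 n k x) choose 2)" using pairs_V2 by simp
      also have "card (V2 n k x) = ((3 ^ n - 1) div 2) - (n choose k)" using cV2 cpn C_def by simp
      finally show ?thesis .
    qed
  qed
qed



end
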